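(* Consider the latent-dynamic inference (LDI) procedure described in the context for a latent conditional model with labeling distribution $P(\mathbf{y})=P(\mathbf{y}\mid\mathbf{x},\mathbf{w})$. Suppose that at some step $n\ge 1$ the current labeling $\mathbf{y}'$ satisfies the exact condition $$P(\mathbf{y}')-\Big(1-\sum_{\mathbf{y}_k\in\mathcal{S}_n}P(\mathbf{y}_k)\Big)\geq 0.$$ Then $\mathbf{y}'=\arg\max_{\mathbf{y}}P(\mathbf{y}\mid\mathbf{x},\mathbf{w})$, i.e., $P(\mathbf{y}')\geq P(\mathbf{y})$ for every labeling $\mathbf{y}\in\mathcal{Y}^m$.
   Context: Setting: a latent conditional model with label set $\mathcal{Y}$, disjoint latent variable sets $\mathcal{H}(y)$ ($y\in\mathcal{Y}$), $\mathcal{H}=\bigcup_y\mathcal{H}(y)$, a probability distribution $P(\mathbf{h})=P(\mathbf{h}\mid\mathbf{x},\mathbf{w})$ on latent-labelings $\mathbf{h}\in\mathcal{H}^m$, and $P(\mathbf{y})=\sum_{\mathbf{h}\in\mathcal{H}(y_1)\times\cdots\times\mathcal{H}(y_m)}P(\mathbf{h})$ for labelings $\mathbf{y}\in\mathcal{Y}^m$ (so $\sum_{\mathbf{y}}P(\mathbf{y})=1$). The parent labeling of $\mathbf{h}$ is the unique $\mathbf{y}$ with $h_j\in\mathcal{H}(y_j)$ for all $j$. LDI procedure: initialize $\mathcal{S}_0=\emptyset$ and $\mathbf{y}'$ with $P(\mathbf{y}')=0$. At step $n=1,2,\dots$, let $\mathbf{h}_n$ be the $n$-th ranked latent-labeling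 in decreasing order of $P(\mathbf{h})$ and $\mathbf{y}_n$ its parent labeling. If $\mathbf{y}_n\notin\mathcal{S}_{n-1}$, set $\mathcal{S}_n=\mathcal{S}_{n-1}\cup\{\mathbf{y}_n\}$, compute $P(\mathbf{y}_n)$, and if $P(\mathbf{y}_n)>P(\mathbf{y}')$ replace $\mathbf{y}'$ by $\mathbf{y}_n$; otherwise set $\mathcal{S}_n=\mathcal{S}_{n-1}$. (Thus after step $n$, $\mathbf{y}'$ is a labeling in $\mathcal{S}_n$ of maximal probability among labelings in $\mathcal{S}_n$.) The procedure stops and returns $\mathbf{y}'$ as soon as the exact condition holds. *)

theory Defs
  imports Complex_Main
begin

text \<open>Y is the label set, H y the latent set of label y, m the sequence length.\<close>

definition labelings :: "'y set \<Rightarrow> nat \<Rightarrow> 'y list set" where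
  "labelings Y m = {ys. length ys = m \<and> set ys \<subseteq> Y}"

definition latent_labelings :: "'y set \<Rightarrow> ('y \<Rightarrow> 'h set) \<Rightarrow> nat \<Rightarrow> 'h list set" where
  "latent_labelings Y H m = {hs. length hs = m \<and> set hs \<subseteq> (\<Union>y\<in>Y. H y)}"

definition latent_of :: "('y \<Rightarrow> 'h set) \<Rightarrow> 'h list \<Rightarrow> 'y list \<Rightarrow> bool" where
  "latent_of H hs ys = list_all2 (\<lambda>h y. h \<in> H y) hs ys"

definition label_prob ::
  "'y set \<Rightarrow> ('y \<Rightarrow> 'h set) \<Rightarrow> nat \<Rightarrow> ('h list \<Rightarrow> real) \<Rightarrow> 'y list \<Rightarrow> real" where
  "label_prob Y H m P ys = (\<Sum>hs \<in> {hs \<in> latent_labelings Y H m. latent_of H hs ys}. P hs)"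

definition parent :: "'y set \<Rightarrow> ('y \<Rightarrow> 'h set) \<Rightarrow> nat \<Rightarrow> 'h list \<Rightarrow> 'y list" where
  "parent Y H m hs = (THE ys. ys \<in> labelings Y m \<and> latent_of H hs ys)"

text \<open>State (S_n, y') of the LDI procedure after step n, given the probability of
  labelings Py, the parent map par, the ranking r (r n = n-th ranked latent-labeling,
  n \<ge> 1) and the initial y0 (with P(y0) = 0).\<close>
fun ldi_state :: "('y list \<Rightarrow> real) \<Rightarrow> ('h list \<Rightarrow> 'y list) \<Rightarrow> (nat \<Rightarrow> 'h list)
    \<Rightarrow> 'y list \<Rightarrow> nat \<Rightarrow> 'y list set \<times> 'y list" where
  "ldi_state Py par r y0 0 = ({}, y0)"
| "ldi_state Py par r y0 (Suc k) =
     (let (S, y') = ldi_state Py par r y0 k; yn = par (r (Suc k)) in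
      if yn \<notin> S then (insert yn S, if Py yn > Py y' then yn else y') else (S, y'))"

end

theory Submission
  imports Defs
begin

lemma ldi_inv:
  assumes par: "\<And>i. 1 \<le> i \<Longrightarrow> i \<le> N \<Longrightarrow> par (r i) \<in> L"
  shows "k \<le> N \<Longrightarrow> finite (fst (ldi_state Py par r y0 k)) \<and> fst (ldi_state Py par r y0 k) \<subseteq> L
     \<and> (snd (ldi_state Py par r y0 k) = y0 \<or> snd (ldi_state Py par r y0 k) \<in> fst (ldi_state Py par r y0 k))
     \<and> (\<forall>z\<in>fst (ldi_state Py par r y0 k). Py z \<le> Py (snd (ldi_state Py par r y0 k)))
     \<and> Py y0 \<le> Py (snd (ldi_state Py par r y0 k))"
proof (induction k)
  case 0
  then show ?case by simp
next
  case (Suc k)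
  obtain S y' where st: "ldi_state Py par r y0 k = (S, y')" by (cases "ldi_state Py par r y0 k")
  have IH: "finite S" "S \<subseteq> L" "y' = y0 \<or> y' \<in> S" "\<forall>z\<in>S. Py z \<le> Py y'" "Py y0 \<le> Py y'"
    using Suc st by auto
  have pin: "par (r (Suc k)) \<in> L" using par Suc.prems by simp
  show ?case using IH pin
    by (auto simp: st Let_def)
qed

theorem theorem2:
  fixes Y :: "'y set" and H :: "'y \<Rightarrow> 'h set" and m :: nat
    and P :: "'h list \<Rightarrow> real" and r :: "nat \<Rightarrow> 'h list" and y0 :: "'y list" and n :: nat
  assumes finY: "finite Y"
    and finH: "\<And>y. y \<in> Y \<Longrightarrow> finite (H y)"
    and disj: "\<And>y z. y \<in> Y \<Longrightarrow> z \<in> Y \<Longrightarrow> y \<noteq> z \<Longrightarrow> H y \<inter> H z = {}"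
    and Pnonneg: "\<And>hs. hs \<in> latent_labelings Y H m \<Longrightarrow> P hs \<ge> 0"
    and Psum: "(\<Sum>hs \<in> latent_labelings Y H m. P hs) = 1"
    and rank_bij: "bij_betw r {1..card (latent_labelings Y H m)} (latent_labelings Y H m)"
    and rank_dec: "\<And>i j. 1 \<le> i \<Longrightarrow> i \<le> j \<Longrightarrow> j \<le> card (latent_labelings Y H m)
                    \<Longrightarrow> P (r j) \<le> P (r i)"
    and init: "label_prob Y H m P y0 = 0"
    and n_range: "1 \<le> n" "n \<le> card (latent_labelings Y H m)"
    and exact: "label_prob Y H m P (snd (ldi_state (label_prob Y H m P) (parent Y H m) r y0 n))
                - (1 - (\<Sum>yk \<in> fst (ldi_state (label_prob Y H m P) (parent Y H m) r y0 n).
                          label_prob Y H m P yk)) \<ge> 0"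
  shows "snd (ldi_state (label_prob Y H m P) (parent Y H m) r y0 n) \<in> labelings Y m
       \<and> (\<forall>ys \<in> labelings Y m.
            label_prob Y H m P ys \<le> label_prob Y H m P (snd (ldi_state (label_prob Y H m P) (parent Y H m) r y0 n)))"
proof -
  define LL where "LL = latent_labelings Y H m"
  define Py where "Py = label_prob Y H m P"
  define A where "A = (\<lambda>ys. {hs \<in> LL. latent_of H hs ys})"
  have PyA: "Py ys = sum P (A ys)" for ys unfolding Py_def A_def LL_def label_prob_def by simp
  have finLL: "finite LL"
  proof -
    have "finite (\<Union>y\<in>Y. H y)" using finY finH by auto
    then have "finite {hs. set hs \<subseteq> (\<Union>y\<in>Y. H y) \<and> length hs = m}"
      by (rule finite_lists_length_eq)
    then show ?thesis unfolding LL_def latent_labelings_def by (simp add: conj_commute)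
  qed
  have Pnn: "\<And>hs. hs \<in> LL \<Longrightarrow> P hs \<ge> 0" using Pnonneg LL_def by simp
  have Pynn: "Py ys \<ge> 0" for ys unfolding PyA A_def by (rule sum_nonneg) (auto intro: Pnn)
  have uniq: "ys = zs" if "ys \<in> labelings Y m" "zs \<in> labelings Y m"
      "latent_of H hs ys" "latent_of H hs zs" for hs ys zs
  proof -
    have l: "length ys = length zs" "length hs = length ys"
      using that(3,4) unfolding latent_of_def by (metis list_all2_lengthD)+
    show ?thesis
    proof (rule nth_equalityI)
      show "length ys = length zs" by (fact l(1))
      fix i assume i: "i < length ys"
      have a: "hs ! i \<in> H (ys ! i)" "hs ! i \<in> H (zs ! i)"
        using that(3,4) i l unfolding latent_of_def by (auto simp: list_all2_conv_all_nth)
      have b: "ys ! i \<in> Y" "zs ! i \<in> Y" using that(1,2) i l unfolding labelings_def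
        by (auto intro!: subsetD[OF _ nth_mem])
      show "ys ! i = zs ! i" using a b disj by blast
    qed
  qed
  have exist: "\<exists>ys\<in>labelings Y m. latent_of H hs ys" if "hs \<in> LL" for hs
  proof -
    define f where "f = (\<lambda>h. SOME y. y \<in> Y \<and> h \<in> H y)"
    have fh: "f h \<in> Y \<and> h \<in> H (f h)" if "h \<in> set hs" for h
    proof -
      from \<open>hs \<in> LL\<close> that obtain y where "y \<in> Y" "h \<in> H y"
        unfolding LL_def latent_labelings_def by auto
      then show ?thesis unfolding f_def by (metis (mono_tags, lifting) someI)
    qed
    have "map f hs \<in> labelings Y m" using fh that
      unfolding labelings_def LL_def latent_labelings_def by auto
    moreover have "latent_of H hs (map f hs)"
      unfolding latent_of_def using fh by (auto simp: list_all2_conv_all_nth)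
    ultimately show ?thesis by blast
  qed
  have parL: "parent Y H m hs \<in> labelings Y m" if hsL: "hs \<in> LL" for hs
  proof -
    obtain ys where ys: "ys \<in> labelings Y m" "latent_of H hs ys" using exist[OF hsL] by blast
    have "parent Y H m hs = ys" unfolding parent_def
      by (rule the_equality) (use ys uniq in auto)
    then show ?thesis using ys by simp
  qed
  have sumle: "sum Py T \<le> 1" if "finite T" "T \<subseteq> labelings Y m" for T
  proof -
    have "sum Py T = (\<Sum>ys\<in>T. sum P (A ys))" by (simp add: PyA)
    also have "\<dots> = sum P (\<Union>(A ` T))"
    proof (rule sum.UNION_disjoint[symmetric])
      show "finite T" by fact
      show "\<forall>i\<in>T. finite (A i)" using finLL unfolding A_def by auto
      show "\<forall>i\<in>T. \<forall>j\<in>T. i \<noteq> j \<longrightarrow> A i \<inter> A j = {}"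
        using that(2) uniq unfolding A_def by blast
    qed
    also have "\<dots> \<le> sum P LL"
      by (rule sum_mono2[OF finLL]) (auto simp: A_def intro: Pnn)
    finally show ?thesis using Psum LL_def by simp
  qed
  have parr: "parent Y H m (r i) \<in> labelings Y m" if "1 \<le> i" "i \<le> card LL" for i
  proof -
    have "r i \<in> LL" using rank_bij that unfolding LL_def bij_betw_def by auto
    then show ?thesis by (rule parL)
  qed
  obtain S y' where st: "ldi_state Py (parent Y H m) r y0 n = (S, y')"
    by (cases "ldi_state Py (parent Y H m) r y0 n")
  have inv: "finite S" "S \<subseteq> labelings Y m" "y' = y0 \<or> y' \<in> S" "\<forall>z\<in>S. Py z \<le> Py y'"
    "Py y0 \<le> Py y'"
    using ldi_inv[of "card LL" "parent Y H m" r "labelings Y m" n Py y0] parr n_range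
    unfolding st LL_def by auto
  have ex: "Py y' - (1 - sum Py S) \<ge> 0" using exact st unfolding Py_def by simp
  have yS: "y' \<in> S"
  proof (rule ccontr)
    assume "y' \<notin> S"
    then have "y' = y0" using inv by auto
    then have "Py y' = 0" using init Py_def by simp
    then have "sum Py S \<le> 0" using inv(4) sum_mono[of S Py "\<lambda>_. 0"] by auto
    with ex \<open>Py y' = 0\<close> show False by simp
  qed
  have opt: "Py ys \<le> Py y'" if ys: "ys \<in> labelings Y m" for ys
  proof (cases "ys \<in> S")
    case True then show ?thesis using inv by auto
  next
    case False
    have "sum Py (insert ys S) \<le> 1" using sumle inv ys by auto
    then have "Py ys + sum Py S \<le> 1" using False inv(1) by simp
    then show ?thesis using ex by simp
  qed
  show ?thesis using yS inv opt st unfolding Py_def by auto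
qed

end
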